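(* Let $G$ be a group and $A,B\subseteq G$ nonempty finite sets, and let $\epsilon\in(0,1)$. (a) If $\operatorname{VC}^\ell_B(A)\leq d$, then $\operatorname{cov}(B:\operatorname{St}^\ell_\epsilon(A))\leq(30|BA|/(\epsilon|A|))^d$. (b) If $\operatorname{VC}^r_B(A)\leq d$, then $\operatorname{cov}(B^{-1}:\operatorname{St}^r_\epsilon(A))\leq(30|AB|/(\epsilon|A|))^d$.
   Context: $AB=\{ab\}$, $B^{-1}=\{b^{-1}\}$. A set system $\mathcal F$ on $X$ shatters $Y\subseteq X$ if $\{Y\cap S:S\in\mathcal F\}$ is the power set of $Y$; $\operatorname{VC}(\mathcal F)$ is the maximum size of a finite shattered set. $\operatorname{VC}^\ell_B(A)=\operatorname{VC}(\{xA:x\in B\})$, $\operatorname{VC}^r_B(A)=\operatorname{VC}(\{Ax:x\in B\})$. $\operatorname{St}^\ell_\epsilon(A)=\{x:|xA\triangle A|\le\epsilon|A|\}$, $\operatorname{St}^r_\epsilon(A)=\{x:|Ax\triangle A|\le\epsilon|A|\}$. For nonempty $Y,C$ and real $K\ge1$, $\operatorname{cov}(Y:C)\leq K$ means $Y\subseteq FC$ for some $F\subseteq Y$ with $|F|\le K$. *)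

theory Defs
  imports Complex_Main "HOL-Algebra.Coset" "HOL-Library.Extended_Nat"
begin

definition shatters :: "'a set set \<Rightarrow> 'a set \<Rightarrow> bool" where
  "shatters F Y \<longleftrightarrow> (\<lambda>S. Y \<inter> S) ` F = Pow Y"

definition VC :: "'a set \<Rightarrow> 'a set set \<Rightarrow> enat" where
  "VC X F = (SUP Y \<in> {Y. Y \<subseteq> X \<and> finite Y \<and> shatters F Y}. enat (card Y))"

definition VC_l :: "('a, 'b) monoid_scheme \<Rightarrow> 'a set \<Rightarrow> 'a set \<Rightarrow> enat" where
  "VC_l G B A = VC (carrier G) ((\<lambda>x. x <#\<^bsub>G\<^esub> A) ` B)"

definition VC_r :: "('a, 'b) monoid_scheme \<Rightarrow> 'a set \<Rightarrow> 'a set \<Rightarrow> enat" where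
  "VC_r G B A = VC (carrier G) ((\<lambda>x. A #>\<^bsub>G\<^esub> x) ` B)"

definition St_l :: "('a, 'b) monoid_scheme \<Rightarrow> real \<Rightarrow> 'a set \<Rightarrow> 'a set" where
  "St_l G \<epsilon> A = {x \<in> carrier G.
     real (card (((x <#\<^bsub>G\<^esub> A) - A) \<union> (A - (x <#\<^bsub>G\<^esub> A)))) \<le> \<epsilon> * real (card A)}"

definition St_r :: "('a, 'b) monoid_scheme \<Rightarrow> real \<Rightarrow> 'a set \<Rightarrow> 'a set" where
  "St_r G \<epsilon> A = {x \<in> carrier G.
     real (card (((A #>\<^bsub>G\<^esub> x) - A) \<union> (A - (A #>\<^bsub>G\<^esub> x)))) \<le> \<epsilon> * real (card A)}"

definition cov_le :: "('a, 'b) monoid_scheme \<Rightarrow> 'a set \<Rightarrow> 'a set \<Rightarrow> real \<Rightarrow> bool" where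
  "cov_le G Y C K \<longleftrightarrow> (\<exists>F. F \<subseteq> Y \<and> finite F \<and> real (card F) \<le> K \<and> Y \<subseteq> F <#>\<^bsub>G\<^esub> C)"

end

theory Submission
  imports Defs
begin


definition nosh :: "nat \<Rightarrow> 'a set set \<Rightarrow> 'a set \<Rightarrow> bool" where
  "nosh d Q A \<longleftrightarrow> (\<forall>Y. Y \<subseteq> A \<longrightarrow> shatters Q Y \<longrightarrow> card Y \<le> d)"

definition Phi :: "nat \<Rightarrow> nat \<Rightarrow> nat" where
  "Phi d m = (\<Sum>i\<le>d. m choose i)"

lemma Phi_0_m[simp]: "Phi 0 m = 1" by (simp add: Phi_def)
lemma Phi_d_0[simp]: "Phi d 0 = 1" unfolding Phi_def by (induction d) auto

lemma Phi_Suc_Suc: "Phi (Suc d) (Suc m) = Phi (Suc d) m + Phi d m"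
proof -
  have "Phi (Suc d) (Suc m) = (\<Sum>i\<le>Suc d. Suc m choose i)" by (simp add: Phi_def)
  also have "\<dots> = 1 + (\<Sum>i\<le>d. Suc m choose Suc i)"
    by (subst sum.atMost_Suc_shift) simp
  also have "\<dots> = (1 + (\<Sum>i\<le>d. m choose Suc i)) + (\<Sum>i\<le>d. m choose i)"
    by (simp add: sum.distrib)
  also have "1 + (\<Sum>i\<le>d. m choose Suc i) = (\<Sum>i\<le>Suc d. m choose i)"
    by (subst sum.atMost_Suc_shift) simp
  finally show ?thesis by (simp add: Phi_def)
qed

lemma shatters_mono: "P1 \<subseteq> P2 \<Longrightarrow> shatters P1 Y \<Longrightarrow> shatters P2 Y"
  unfolding shatters_def
proof (rule equalityI)
  assume "P1 \<subseteq> P2" "(\<lambda>S. Y \<inter> S) ` P1 = Pow Y"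
  then show "Pow Y \<subseteq> (\<lambda>S. Y \<inter> S) ` P2" by (metis image_mono)
qed auto

lemma nosh_mono: "P1 \<subseteq> P2 \<Longrightarrow> nosh d P2 A \<Longrightarrow> nosh d P1 A"
  unfolding nosh_def using shatters_mono[of P1 P2] by blast

lemma decomp_card:
  assumes "finite A" "Q \<subseteq> Pow A"
  shows "card Q = card ((\<lambda>R. R - {a}) ` Q) + card {R\<in>Q. a \<notin> R \<and> insert a R \<in> Q}"
proof -
  have fQ: "finite Q" using assms finite_subset by (metis finite_Pow_iff)
  define Qo where "Qo = {R\<in>Q. a \<notin> R}"
  define Qi where "Qi = {R\<in>Q. a \<in> R}"
  have Q: "Q = Qo \<union> Qi" "Qo \<inter> Qi = {}" unfolding Qo_def Qi_def by auto
  have im0: "(\<lambda>R. R - {a}) ` Qo = Qo"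
  proof -
    have "\<And>R. R \<in> Qo \<Longrightarrow> R - {a} = R" unfolding Qo_def by auto
    then show ?thesis by simp
  qed
  have im: "(\<lambda>R. R - {a}) ` Q = Qo \<union> (\<lambda>R. R - {a}) ` Qi"
    using im0 Q(1) by (metis image_Un)
  have inj: "inj_on (\<lambda>R. R - {a}) Qi" unfolding Qi_def inj_on_def by blast
  have int: "Qo \<inter> (\<lambda>R. R - {a}) ` Qi = {R\<in>Q. a \<notin> R \<and> insert a R \<in> Q}"
  proof (rule equalityI; rule subsetI)
    fix R assume "R \<in> Qo \<inter> (\<lambda>R. R - {a}) ` Qi"
    then obtain S where "R \<in> Q" "a \<notin> R" "S \<in> Q" "a \<in> S" "R = S - {a}"
      unfolding Qo_def Qi_def by auto
    moreover then have "insert a R = S" by auto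
    ultimately show "R \<in> {R\<in>Q. a \<notin> R \<and> insert a R \<in> Q}" by simp
  next
    fix R assume R: "R \<in> {R\<in>Q. a \<notin> R \<and> insert a R \<in> Q}"
    then have "insert a R \<in> Qi" "R = insert a R - {a}" "R \<in> Qo" unfolding Qi_def Qo_def by auto
    then show "R \<in> Qo \<inter> (\<lambda>R. R - {a}) ` Qi" by blast
  qed
  have fo: "finite Qo" "finite Qi" using fQ unfolding Qo_def Qi_def by auto
  have "card (Qo \<union> (\<lambda>R. R - {a}) ` Qi) + card (Qo \<inter> (\<lambda>R. R - {a}) ` Qi) = card Qo + card Qi"
    using card_Un_Int[of Qo "(\<lambda>R. R - {a}) ` Qi"] fo card_image[OF inj] by simp
  moreover have "card Q = card Qo + card Qi" using Q fo card_Un_disjoint by metis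
  ultimately show ?thesis using im int by simp
qed

lemma nosh_Q1:
  assumes "nosh d Q (insert a A0)" "a \<notin> A0"
  shows "nosh d ((\<lambda>R. R - {a}) ` Q) A0"
  unfolding nosh_def
proof (intro allI impI)
  fix Y assume Y: "Y \<subseteq> A0" "shatters ((\<lambda>R. R - {a}) ` Q) Y"
  have "(\<lambda>S. Y \<inter> S) ` ((\<lambda>R. R - {a}) ` Q) = (\<lambda>S. Y \<inter> S) ` Q"
  proof -
    have "\<And>R. Y \<inter> (R - {a}) = Y \<inter> R" using Y(1) assms(2) by auto
    then show ?thesis unfolding image_image by simp
  qed
  then have "shatters Q Y" using Y(2) unfolding shatters_def by simp
  then show "card Y \<le> d" using assms(1) Y unfolding nosh_def by auto
qed


lemma nosh_Q2:
  assumes "nosh (Suc d) Q (insert a A0)" "a \<notin> A0" "finite A0"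
  shows "nosh d {R\<in>Q. a \<notin> R \<and> insert a R \<in> Q} A0"
  unfolding nosh_def
proof (intro allI impI)
  fix Y assume Y: "Y \<subseteq> A0" "shatters {R\<in>Q. a \<notin> R \<and> insert a R \<in> Q} Y"
  have "Pow (insert a Y) \<subseteq> (\<lambda>S. insert a Y \<inter> S) ` Q"
  proof
    fix Z assume Z: "Z \<in> Pow (insert a Y)"
    then have "Z - {a} \<in> Pow Y" by auto
    then have "Z - {a} \<in> (\<lambda>S. Y \<inter> S) ` {R\<in>Q. a \<notin> R \<and> insert a R \<in> Q}"
      using Y(2) unfolding shatters_def by simp
    then obtain R where R: "R \<in> Q" "a \<notin> R" "insert a R \<in> Q" "Y \<inter> R = Z - {a}"
      by auto
    show "Z \<in> (\<lambda>S. insert a Y \<inter> S) ` Q"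
    proof (cases "a \<in> Z")
      case True
      then have "insert a Y \<inter> insert a R = Z" using R(4) Z by auto
      then show ?thesis using R(3) by (metis image_eqI)
    next
      case False
      then have "insert a Y \<inter> R = Z" using R(2,4) Z by auto
      then show ?thesis using R(1) by (metis image_eqI)
    qed
  qed
  then have "shatters Q (insert a Y)" unfolding shatters_def by auto
  moreover have "insert a Y \<subseteq> insert a A0" using Y by auto
  ultimately have "card (insert a Y) \<le> Suc d" using assms(1) unfolding nosh_def by blast
  moreover have "finite Y" using Y(1) assms(3) finite_subset by blast
  moreover have "a \<notin> Y" using Y(1) assms(2) by auto
  ultimately show "card Y \<le> d" by simp
qed

lemma nosh_Q2_0:
  assumes "nosh 0 Q (insert a A0)"
  shows "{R\<in>Q. a \<notin> R \<and> insert a R \<in> Q} = {}"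
proof (rule ccontr)
  assume "{R\<in>Q. a \<notin> R \<and> insert a R \<in> Q} \<noteq> {}"
  then obtain R where R: "R \<in> Q" "a \<notin> R" "insert a R \<in> Q" by auto
  have "Pow {a} \<subseteq> (\<lambda>S. {a} \<inter> S) ` Q"
  proof
    fix Z assume "Z \<in> Pow {a}"
    then have "Z = {} \<or> Z = {a}" by auto
    moreover have "{a} \<inter> R = {}" "{a} \<inter> insert a R = {a}" using R by auto
    ultimately show "Z \<in> (\<lambda>S. {a} \<inter> S) ` Q" using R by (metis image_eqI)
  qed
  then have "shatters Q {a}" unfolding shatters_def by auto
  then show False using assms unfolding nosh_def by auto
qed

lemma sauer:
  assumes "finite A" "Q \<subseteq> Pow A" "nosh d Q A"
  shows "card Q \<le> Phi d (card A)"
  using assms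
proof (induction A arbitrary: d Q rule: finite_induct)
  case empty
  then have "Q \<subseteq> {{}}" by auto
  then have "card Q \<le> card {{}::'a set}" by (intro card_mono) auto
  then have "card Q \<le> 1" by simp
  then show ?case by simp
next
  case (insert a A0)
  define Q1 where "Q1 = (\<lambda>R. R - {a}) ` Q"
  define Q2 where "Q2 = {R\<in>Q. a \<notin> R \<and> insert a R \<in> Q}"
  have cQ: "card Q = card Q1 + card Q2"
    unfolding Q1_def Q2_def using decomp_card[of "insert a A0" Q a] insert by auto
  have Q1s: "Q1 \<subseteq> Pow A0" using insert(4) unfolding Q1_def by auto
  have Q2s: "Q2 \<subseteq> Pow A0" using insert(4) insert(2) unfolding Q2_def by auto
  have n1: "nosh d Q1 A0" unfolding Q1_def using nosh_Q1[OF insert(5) insert(2)] .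
  have c1: "card Q1 \<le> Phi d (card A0)" using insert.IH[OF Q1s n1] .
  show ?case
  proof (cases d)
    case 0
    then have "Q2 = {}" unfolding Q2_def using nosh_Q2_0[of Q a A0] insert(5) by simp
    then show ?thesis using cQ c1 0 by simp
  next
    case (Suc d')
    have n2: "nosh d' Q2 A0" unfolding Q2_def using nosh_Q2[of d' Q a A0] insert(1,2,5) Suc by simp
    have c2: "card Q2 \<le> Phi d' (card A0)" using insert.IH[OF Q2s n2] .
    have "card (insert a A0) = Suc (card A0)" using insert(1,2) by simp
    moreover have "Phi d (Suc (card A0)) = Phi d (card A0) + Phi d' (card A0)"
      using Suc Phi_Suc_Suc by simp
    ultimately show ?thesis using cQ c1 c2 by simp
  qed
qed


definition edges :: "'a set set \<Rightarrow> 'a set \<Rightarrow> ('a \<times> 'a set) set" where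
  "edges Q A = {(b,R). b \<in> A \<and> R \<in> Q \<and> b \<notin> R \<and> insert b R \<in> Q}"

lemma finite_edges: "finite A \<Longrightarrow> Q \<subseteq> Pow A \<Longrightarrow> finite (edges Q A)"
proof -
  assume "finite A" "Q \<subseteq> Pow A"
  then have "finite (A \<times> Q)" by (meson finite_Pow_iff finite_SigmaI finite_subset)
  moreover have "edges Q A \<subseteq> A \<times> Q" unfolding edges_def by auto
  ultimately show ?thesis by (rule finite_subset[rotated])
qed

lemma edge_bound:
  assumes "finite A" "Q \<subseteq> Pow A" "nosh d Q A"
  shows "card (edges Q A) \<le> d * card Q"
  using assms
proof (induction A arbitrary: d Q rule: finite_induct)
  case empty
  then show ?case unfolding edges_def by simp
next
  case (insert a A0)
  define Q1 where "Q1 = (\<lambda>R. R - {a}) ` Q"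
  define Q2 where "Q2 = {R\<in>Q. a \<notin> R \<and> insert a R \<in> Q}"
  have fQ: "finite Q" using insert(1,4) by (meson finite.insertI finite_Pow_iff finite_subset)
  have cQ: "card Q = card Q1 + card Q2"
    unfolding Q1_def Q2_def using decomp_card[of "insert a A0" Q a] insert by auto
  have Q1s: "Q1 \<subseteq> Pow A0" using insert(4) unfolding Q1_def by auto
  have Q2s: "Q2 \<subseteq> Pow A0" using insert(4) insert(2) unfolding Q2_def by auto
  have n1: "nosh d Q1 A0" unfolding Q1_def using nosh_Q1[OF insert(5) insert(2)] .
  have c1: "card (edges Q1 A0) \<le> d * card Q1" using insert.IH[OF Q1s n1] .
  define E where "E = edges Q (insert a A0)"
  define Ea where "Ea = {(b,R). (b,R) \<in> E \<and> b = a}"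
  define Eo where "Eo = {(b,R). (b,R) \<in> E \<and> b \<in> A0 \<and> a \<notin> R}"
  define Ei where "Ei = {(b,R). (b,R) \<in> E \<and> b \<in> A0 \<and> a \<in> R}"
  define g where "g = (\<lambda>(b::'a,R). (b, R - {a}))"
  have fE: "finite E" unfolding E_def using finite_edges insert by (metis finite.insertI)
  have E: "E = Ea \<union> (Eo \<union> Ei)" unfolding Ea_def Eo_def Ei_def E_def edges_def by auto
  have fins: "finite Ea" "finite Eo" "finite Ei"
    using fE unfolding Ea_def Eo_def Ei_def by (auto intro: finite_subset[rotated])
  have "card E = card Ea + card (Eo \<union> Ei)"
    unfolding E using fins insert(2) by (intro card_Un_disjoint) (auto simp: Ea_def Eo_def Ei_def)
  also have "card (Eo \<union> Ei) = card Eo + card Ei"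
    using fins by (intro card_Un_disjoint) (auto simp: Eo_def Ei_def)
  finally have cE: "card E = card Ea + card Eo + card Ei" by simp
  have "Ea = (\<lambda>R. (a,R)) ` Q2" unfolding Ea_def Q2_def E_def edges_def by auto
  then have cEa: "card Ea = card Q2" by (simp add: card_image inj_on_def)
  have inj: "inj_on g Ei" unfolding g_def Ei_def inj_on_def by auto
  have s1: "Eo \<subseteq> edges Q1 A0"
  proof (rule subrelI)
    fix b R assume "(b,R) \<in> Eo"
    then have x: "b \<in> A0" "R \<in> Q" "a \<notin> R" "b \<notin> R" "insert b R \<in> Q"
      unfolding Eo_def E_def edges_def by simp_all
    have e: "R = R - {a}" "insert b R = insert b R - {a}" using x insert(2) by auto
    have "R \<in> Q1" unfolding Q1_def by (rule image_eqI[of _ _ R]) (use e x in auto)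
    moreover have "insert b R \<in> Q1" unfolding Q1_def
      by (rule image_eqI[of _ _ "insert b R"]) (use e x in auto)
    ultimately show "(b,R) \<in> edges Q1 A0" unfolding edges_def using x by simp
  qed
  have s2: "g ` Ei \<subseteq> edges Q1 A0"
  proof (rule subsetI)
    fix x assume "x \<in> g ` Ei"
    then obtain y where y: "y \<in> Ei" "x = g y" by blast
    obtain b R where bR: "y = (b,R)" by (cases y)
    have x: "b \<in> A0" "R \<in> Q" "a \<in> R" "b \<notin> R" "insert b R \<in> Q"
      using y(1) unfolding bR Ei_def E_def edges_def by simp_all
    have xe: "x = (b, R - {a})" using y(2) bR unfolding g_def by simp
    have e: "insert b (R - {a}) = insert b R - {a}" using x insert(2) by auto
    have "R - {a} \<in> Q1" unfolding Q1_def using x(2) by (rule imageI)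
    moreover have "insert b (R - {a}) \<in> Q1" unfolding Q1_def e using x(5) by (rule imageI)
    ultimately show "x \<in> edges Q1 A0" unfolding edges_def xe using x by simp
  qed
  have s3: "Eo \<inter> g ` Ei \<subseteq> edges Q2 A0"
  proof (rule subsetI)
    fix x assume "x \<in> Eo \<inter> g ` Ei"
    then obtain y where y: "x \<in> Eo" "y \<in> Ei" "x = g y" by blast
    obtain b S where bS: "y = (b,S)" by (cases y)
    have S: "b \<in> A0" "S \<in> Q" "a \<in> S" "b \<notin> S" "insert b S \<in> Q"
      using y(2) unfolding bS Ei_def E_def edges_def by simp_all
    have xe: "x = (b, S - {a})" using y(3) bS unfolding g_def by simp
    define R where "R = S - {a}"
    have x: "R \<in> Q" "a \<notin> R" "b \<notin> R" "insert b R \<in> Q"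
      using y(1) unfolding xe R_def[symmetric] Eo_def E_def edges_def by simp_all
    have SR: "S = insert a R" using S(3) unfolding R_def by auto
    have "insert a (insert b R) = insert b S" unfolding SR by (simp add: insert_commute)
    then have "R \<in> Q2" "insert b R \<in> Q2" unfolding Q2_def using x S SR insert(2) by auto
    then show "x \<in> edges Q2 A0" unfolding edges_def xe R_def[symmetric] using x S by simp
  qed
  have fe1: "finite (edges Q1 A0)" "finite (edges Q2 A0)" using finite_edges insert(1) Q1s Q2s by auto
  have "card Eo + card (g ` Ei) = card (Eo \<union> g ` Ei) + card (Eo \<inter> g ` Ei)"
    using card_Un_Int[of Eo "g ` Ei"] fins by simp
  also have "\<dots> \<le> card (edges Q1 A0) + card (edges Q2 A0)"
    using s1 s2 s3 fe1 by (intro add_mono card_mono) auto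
  finally have cEoi: "card Eo + card Ei \<le> card (edges Q1 A0) + card (edges Q2 A0)"
    using card_image[OF inj] by simp
  show ?case
  proof (cases d)
    case 0
    then have "Q2 = {}" unfolding Q2_def using nosh_Q2_0[of Q a A0] insert(5) by simp
    then have "edges Q2 A0 = {}" unfolding edges_def by simp
    then show ?thesis using cE cEa cEoi c1 \<open>Q2 = {}\<close> 0 unfolding E_def by simp
  next
    case (Suc d')
    have n2: "nosh d' Q2 A0" unfolding Q2_def using nosh_Q2[of d' Q a A0] insert(1,2,5) Suc by simp
    have c2: "card (edges Q2 A0) \<le> d' * card Q2" using insert.IH[OF Q2s n2] .
    have "card E \<le> card Q2 + d * card Q1 + d' * card Q2" using cE cEa cEoi c1 c2 by simp
    also have "\<dots> = d * card Q" using cQ Suc by (simp add: algebra_simps)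
    finally show ?thesis unfolding E_def .
  qed
qed


lemma ind_sum_card: "finite S \<Longrightarrow> (\<Sum>x\<in>S. if P x then 1 else 0) = (card {x\<in>S. P x} :: nat)"
  by (simp add: sum.inter_filter[symmetric])

lemma wedge_aux:
  assumes "finite A" "Q \<subseteq> Pow A" "nosh d Q A"
  shows "\<forall>w::'a set \<Rightarrow> nat. (\<forall>R\<in>Q. w R \<le> N) \<longrightarrow>
    (\<Sum>e\<in>edges Q A. min (w (snd e)) (w (insert (fst e) (snd e)))) \<le> d * (\<Sum>R\<in>Q. w R)"
proof (induction N)
  case 0
  show ?case
  proof (intro allI impI)
    fix w :: "'a set \<Rightarrow> nat" assume "\<forall>R\<in>Q. w R \<le> 0"
    then have "\<forall>e\<in>edges Q A. min (w (snd e)) (w (insert (fst e) (snd e))) = 0"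
      unfolding edges_def by auto
    then show "(\<Sum>e\<in>edges Q A. min (w (snd e)) (w (insert (fst e) (snd e)))) \<le> d * (\<Sum>R\<in>Q. w R)"
      by simp
  qed
next
  case (Suc N)
  show ?case
  proof (intro allI impI)
    fix w :: "'a set \<Rightarrow> nat" assume wN: "\<forall>R\<in>Q. w R \<le> Suc N"
    define w' where "w' = (\<lambda>R. w R - 1)"
    define Q1 where "Q1 = {R\<in>Q. 1 \<le> w R}"
    have fQ: "finite Q" using assms(1,2) by (meson finite_Pow_iff finite_subset)
    have fE: "finite (edges Q A)" using finite_edges assms by blast
    have IH: "(\<Sum>e\<in>edges Q A. min (w' (snd e)) (w' (insert (fst e) (snd e)))) \<le> d * (\<Sum>R\<in>Q. w' R)"
    proof -
      have "\<forall>R\<in>Q. w' R \<le> N" using wN unfolding w'_def by auto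
      then show ?thesis using Suc.IH by blast
    qed
    have split: "\<And>x y::nat. min x y = (if 1 \<le> x \<and> 1 \<le> y then 1 else 0) + min (x - 1) (y - 1)"
      by auto
    have "(\<Sum>e\<in>edges Q A. min (w (snd e)) (w (insert (fst e) (snd e))))
      = (\<Sum>e\<in>edges Q A. (if 1 \<le> w (snd e) \<and> 1 \<le> w (insert (fst e) (snd e)) then 1 else 0))
        + (\<Sum>e\<in>edges Q A. min (w' (snd e)) (w' (insert (fst e) (snd e))))"
      unfolding w'_def by (subst split) (simp add: sum.distrib)
    also have "(\<Sum>e\<in>edges Q A. (if 1 \<le> w (snd e) \<and> 1 \<le> w (insert (fst e) (snd e)) then 1 else 0))
       = card {e\<in>edges Q A. 1 \<le> w (snd e) \<and> 1 \<le> w (insert (fst e) (snd e))}"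
      using fE by (rule ind_sum_card)
    also have "{e\<in>edges Q A. 1 \<le> w (snd e) \<and> 1 \<le> w (insert (fst e) (snd e))} = edges Q1 A"
      unfolding edges_def Q1_def by auto
    also have "card (edges Q1 A) \<le> d * card Q1"
      using edge_bound[OF assms(1), of Q1 d] nosh_mono[OF _ assms(3), of Q1] assms(2)
      unfolding Q1_def by auto
    finally have L: "(\<Sum>e\<in>edges Q A. min (w (snd e)) (w (insert (fst e) (snd e))))
      \<le> d * card Q1 + d * (\<Sum>R\<in>Q. w' R)" using IH by linarith
    have "(\<Sum>R\<in>Q. w R) = (\<Sum>R\<in>Q. (if 1 \<le> w R then 1 else 0) + w' R)"
      unfolding w'_def by (intro sum.cong) auto
    also have "\<dots> = card Q1 + (\<Sum>R\<in>Q. w' R)"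
      unfolding sum.distrib Q1_def using ind_sum_card[OF fQ] by simp
    finally show "(\<Sum>e\<in>edges Q A. min (w (snd e)) (w (insert (fst e) (snd e)))) \<le> d * (\<Sum>R\<in>Q. w R)"
      using L by (simp add: algebra_simps)
  qed
qed

lemma wedge:
  assumes "finite A" "Q \<subseteq> Pow A" "nosh d Q A"
  shows "(\<Sum>e\<in>edges Q A. min (w (snd e)) (w (insert (fst e) (snd e)))) \<le> d * (\<Sum>R\<in>Q. w R)"
proof -
  have fQ: "finite Q" using assms(1,2) by (meson finite_Pow_iff finite_subset)
  have "\<forall>R\<in>Q. w R \<le> Max (w ` Q)" using fQ by simp
  then show ?thesis using wedge_aux[OF assms, of "Max (w ` Q)"] by blast
qed



lemma pair_count:
  assumes "finite C" "finite D" "\<forall>S\<in>C. \<forall>S'\<in>C. S' - S \<subseteq> D"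
  shows "(\<Sum>b\<in>D. card {S\<in>C. b \<notin> S} * card {S\<in>C. b \<in> S}) = (\<Sum>S\<in>C. \<Sum>S'\<in>C. card (S' - S))"
proof -
  have "(\<Sum>b\<in>D. card {S\<in>C. b \<notin> S} * card {S\<in>C. b \<in> S})
      = (\<Sum>b\<in>D. (\<Sum>S\<in>C. if b \<notin> S then 1 else 0) * (\<Sum>S'\<in>C. if b \<in> S' then 1 else 0))"
    using ind_sum_card[OF assms(1)] by simp
  also have "\<dots> = (\<Sum>b\<in>D. \<Sum>S\<in>C. \<Sum>S'\<in>C. (if b \<notin> S then 1 else 0) * (if b \<in> S' then 1 else 0))"
    by (simp add: sum_product)
  also have "\<dots> = (\<Sum>S\<in>C. \<Sum>b\<in>D. \<Sum>S'\<in>C. (if b \<notin> S then 1 else 0) * (if b \<in> S' then 1 else 0))"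
    by (rule sum.swap)
  also have "\<dots> = (\<Sum>S\<in>C. \<Sum>S'\<in>C. \<Sum>b\<in>D. (if b \<notin> S then 1 else 0) * (if b \<in> S' then 1 else 0))"
    by (intro sum.cong refl sum.swap)
  also have "\<dots> = (\<Sum>S\<in>C. \<Sum>S'\<in>C. card (S' - S))"
  proof (intro sum.cong refl)
    fix S S' assume "S \<in> C" "S' \<in> C"
    then have sub: "S' - S \<subseteq> D" using assms(3) by blast
    have "(\<Sum>b\<in>D. (if b \<notin> S then 1 else 0) * (if b \<in> S' then 1 else 0::nat))
        = (\<Sum>b\<in>D. if b \<in> S' - S then 1 else 0)" by (intro sum.cong) auto
    also have "\<dots> = card {b\<in>D. b \<in> S' - S}" using ind_sum_card[OF assms(2)] by simp
    also have "{b\<in>D. b \<in> S' - S} = S' - S" using sub by auto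
    finally show "(\<Sum>b\<in>D. (if b \<notin> S then 1 else 0) * (if b \<in> S' then 1 else 0::nat)) = card (S' - S)" .
  qed
  finally show ?thesis .
qed

lemma pair_sep:
  fixes \<delta> :: real
  assumes "finite C" "\<forall>S\<in>C. finite S"
    "\<forall>S\<in>C. \<forall>S'\<in>C. S \<noteq> S' \<longrightarrow> real (card ((S - S') \<union> (S' - S))) > \<delta>" "\<delta> \<ge> 0"
  shows "real (\<Sum>S\<in>C. \<Sum>S'\<in>C. card (S' - S)) \<ge> real (card C) * (real (card C) - 1) * \<delta> / 2"
proof -
  have sw: "(\<Sum>S\<in>C. \<Sum>S'\<in>C. card (S' - S)) = (\<Sum>S\<in>C. \<Sum>S'\<in>C. card (S - S'))"
    by (rule sum.swap)
  have X: "2 * real (\<Sum>S\<in>C. \<Sum>S'\<in>C. card (S' - S)) = (\<Sum>S\<in>C. \<Sum>S'\<in>C. real (card (S' - S) + card (S - S')))"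
  proof -
    have a: "real (\<Sum>S\<in>C. \<Sum>S'\<in>C. card (S' - S)) = (\<Sum>S\<in>C. \<Sum>S'\<in>C. real (card (S' - S)))" by simp
    have b: "real (\<Sum>S\<in>C. \<Sum>S'\<in>C. card (S' - S)) = (\<Sum>S\<in>C. \<Sum>S'\<in>C. real (card (S - S')))"
      using arg_cong[OF sw, of real] by simp
    have c: "(\<Sum>S\<in>C. \<Sum>S'\<in>C. real (card (S' - S) + card (S - S')))
       = (\<Sum>S\<in>C. \<Sum>S'\<in>C. real (card (S' - S))) + (\<Sum>S\<in>C. \<Sum>S'\<in>C. real (card (S - S')))"
      by (simp add: sum.distrib)
    show ?thesis using a b c by linarith
  qed
  have Y: "(\<Sum>S\<in>C. (real (card C) - 1) * \<delta>) \<le> (\<Sum>S\<in>C. \<Sum>S'\<in>C. real (card (S' - S) + card (S - S')))"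
  proof (rule sum_mono)
    fix S assume S: "S \<in> C"
    have i1: "(\<Sum>S'\<in>C - {S}. real (card (S' - S) + card (S - S'))) \<le> (\<Sum>S'\<in>C. real (card (S' - S) + card (S - S')))"
      using assms(1) by (intro sum_mono2) auto
    have i2: "(\<Sum>S'\<in>C - {S}. \<delta>) \<le> (\<Sum>S'\<in>C - {S}. real (card (S' - S) + card (S - S')))"
    proof (rule sum_mono)
      fix S' assume S': "S' \<in> C - {S}"
      have "card ((S - S') \<union> (S' - S)) = card (S - S') + card (S' - S)"
        using assms(2) S S' by (intro card_Un_disjoint) auto
      then show "\<delta> \<le> real (card (S' - S) + card (S - S'))"
        using assms(3) S S' by force
    qed
    have i3: "(\<Sum>S'\<in>C - {S}. \<delta>) = (real (card C) - 1) * \<delta>"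
    proof -
      have "card C \<ge> 1" using S assms(1) by (metis One_nat_def Suc_leI card_gt_0_iff empty_iff)
      then show ?thesis using S assms(1) by (simp add: card_Diff_singleton of_nat_diff)
    qed
    show "(real (card C) - 1) * \<delta> \<le> (\<Sum>S'\<in>C. real (card (S' - S) + card (S - S')))"
      using i1 i2 i3 by linarith
  qed
  have "(\<Sum>S\<in>C. (real (card C) - 1) * \<delta>) = real (card C) * (real (card C) - 1) * \<delta>" by simp
  then show ?thesis using X Y by linarith
qed


definition tr :: "'a set set \<Rightarrow> 'a set \<Rightarrow> 'a set set" where
  "tr P A = (\<lambda>S. S \<inter> A) ` P"

definition cnt :: "'a set set \<Rightarrow> 'a set \<Rightarrow> 'a set \<Rightarrow> nat" where
  "cnt P A R = card {S\<in>P. S \<inter> A = R}"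

definition fsum :: "'a set set \<Rightarrow> 'a set \<Rightarrow> 'a \<Rightarrow> nat" where
  "fsum P A' b = (\<Sum>R\<in>Pow A'. min (cnt P (insert b A') R) (cnt P (insert b A') (insert b R)))"

lemma card_fibers: "finite P \<Longrightarrow> (\<Sum>R\<in>tr P A. cnt P A R) = card P"
proof -
  assume f: "finite P"
  have "(\<Sum>S\<in>P. (1::nat)) = (\<Sum>y\<in>(\<lambda>S. S \<inter> A) ` P. \<Sum>x\<in>{x. x \<in> P \<and> x \<inter> A = y}. 1)"
    by (rule sum.image_gen[OF f])
  then show ?thesis unfolding tr_def cnt_def by simp
qed

lemma min_ge_prod:
  fixes x y :: nat
  assumes "x + y > 0"
  shows "real x * real y / real (x + y) \<le> real (min x y)"
proof -
  have "real x * real y \<le> real (min x y) * real (x + y)"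
  proof (cases "x \<le> y")
    case True
    then have "real x * real y \<le> real x * (real x + real y)" by (simp add: mult_left_mono)
    then show ?thesis using True by simp
  next
    case False
    then have "real x * real y \<le> real y * (real x + real y)"
      using mult_nonneg_nonneg[of "real y" "real y"] by (simp add: algebra_simps)
    then show ?thesis using False by simp
  qed
  then show ?thesis using assms by (simp add: divide_le_eq)
qed

lemma lower:
  fixes \<delta> :: real
  assumes "finite X" "P \<subseteq> Pow X" "A' \<subseteq> X" "\<delta> \<ge> 0"
    "\<forall>S\<in>P. \<forall>S'\<in>P. S \<noteq> S' \<longrightarrow> real (card ((S - S') \<union> (S' - S))) > \<delta>"
  shows "real (\<Sum>b\<in>X - A'. fsum P A' b) \<ge> \<delta> / 2 * (real (card P) - real (card (tr P A')))"
proof -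
  have fP: "finite P" using assms(1,2) by (meson finite_Pow_iff finite_subset)
  define C where "C = (\<lambda>R. {S\<in>P. S \<inter> A' = R})"
  have fC: "\<And>R. finite (C R)" unfolding C_def using fP by simp
  have Cne: "\<And>R. R \<in> tr P A' \<Longrightarrow> card (C R) > 0"
    unfolding C_def tr_def using fP by (auto simp: card_gt_0_iff)
  have trs: "tr P A' \<subseteq> Pow A'" unfolding tr_def by auto
  have ftr: "finite (tr P A')" unfolding tr_def using fP by simp
  define x where "x = (\<lambda>b R. card {S\<in>C R. b \<notin> S})"
  define y where "y = (\<lambda>b R. card {S\<in>C R. b \<in> S})"
  have xy: "\<And>b R. x b R + y b R = card (C R)"
  proof -
    fix b R
    have e: "C R = {S\<in>C R. b \<notin> S} \<union> {S\<in>C R. b \<in> S}" by auto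
    have "card ({S\<in>C R. b \<notin> S} \<union> {S\<in>C R. b \<in> S}) = card {S\<in>C R. b \<notin> S} + card {S\<in>C R. b \<in> S}"
      by (rule card_Un_disjoint) (use fC in auto)
    then show "x b R + y b R = card (C R)" unfolding x_def y_def using e by simp
  qed
  have step1: "\<And>b. b \<in> X - A' \<Longrightarrow>
      (\<Sum>R\<in>tr P A'. real (x b R) * real (y b R) / real (card (C R))) \<le> real (fsum P A' b)"
  proof -
    fix b assume b: "b \<in> X - A'"
    have e0: "\<And>R. R \<subseteq> A' \<Longrightarrow> cnt P (insert b A') R = x b R"
      unfolding cnt_def x_def C_def
    proof -
      fix R assume "R \<subseteq> A'"
      then have "{S \<in> P. S \<inter> insert b A' = R} = {S \<in> {S \<in> P. S \<inter> A' = R}. b \<notin> S}" using b by auto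
      then show "card {S \<in> P. S \<inter> insert b A' = R} = card {S \<in> {S \<in> P. S \<inter> A' = R}. b \<notin> S}" by simp
    qed
    have e1: "\<And>R. R \<subseteq> A' \<Longrightarrow> cnt P (insert b A') (insert b R) = y b R"
      unfolding cnt_def y_def C_def
    proof -
      fix R assume "R \<subseteq> A'"
      then have "{S \<in> P. S \<inter> insert b A' = insert b R} = {S \<in> {S \<in> P. S \<inter> A' = R}. b \<in> S}" using b by auto
      then show "card {S \<in> P. S \<inter> insert b A' = insert b R} = card {S \<in> {S \<in> P. S \<inter> A' = R}. b \<in> S}" by simp
    qed
    have "(\<Sum>R\<in>tr P A'. real (x b R) * real (y b R) / real (card (C R)))
        \<le> (\<Sum>R\<in>tr P A'. real (min (x b R) (y b R)))"
    proof (rule sum_mono)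
      fix R assume "R \<in> tr P A'"
      then show "real (x b R) * real (y b R) / real (card (C R)) \<le> real (min (x b R) (y b R))"
        using min_ge_prod[of "x b R" "y b R"] xy[of b R] Cne by simp
    qed
    also have "\<dots> \<le> (\<Sum>R\<in>Pow A'. real (min (x b R) (y b R)))"
      using trs assms(1,3) by (intro sum_mono2) (auto intro: finite_subset)
    also have "\<dots> = real (fsum P A' b)"
      unfolding fsum_def of_nat_sum using e0 e1 by (intro sum.cong) auto
    finally show "(\<Sum>R\<in>tr P A'. real (x b R) * real (y b R) / real (card (C R))) \<le> real (fsum P A' b)" .
  qed
  have step2: "\<And>R. R \<in> tr P A' \<Longrightarrow>
     real (card (C R)) * (real (card (C R)) - 1) * \<delta> / 2 \<le> real (\<Sum>b\<in>X - A'. x b R * y b R)"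
  proof -
    fix R assume R: "R \<in> tr P A'"
    have sub: "\<forall>S\<in>C R. \<forall>S'\<in>C R. S' - S \<subseteq> X - A'"
    proof (intro ballI)
      fix S S' assume "S \<in> C R" "S' \<in> C R"
      then have "S \<inter> A' = S' \<inter> A'" "S' \<subseteq> X" unfolding C_def using assms(2) by auto
      then show "S' - S \<subseteq> X - A'" by blast
    qed
    have "(\<Sum>b\<in>X - A'. x b R * y b R) = (\<Sum>S\<in>C R. \<Sum>S'\<in>C R. card (S' - S))"
      unfolding x_def y_def using pair_count[OF fC _ sub] assms(1) by simp
    moreover have "real (\<Sum>S\<in>C R. \<Sum>S'\<in>C R. card (S' - S)) \<ge> real (card (C R)) * (real (card (C R)) - 1) * \<delta> / 2"
      by (rule pair_sep[OF fC]) (use assms(1,2,4,5) in \<open>auto simp: C_def intro: finite_subset\<close>)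
    ultimately show "real (card (C R)) * (real (card (C R)) - 1) * \<delta> / 2 \<le> real (\<Sum>b\<in>X - A'. x b R * y b R)"
      by simp
  qed
  have "(\<Sum>R\<in>tr P A'. (real (card (C R)) - 1) * \<delta> / 2)
      \<le> (\<Sum>R\<in>tr P A'. (\<Sum>b\<in>X - A'. real (x b R) * real (y b R)) / real (card (C R)))"
  proof (rule sum_mono)
    fix R assume R: "R \<in> tr P A'"
    have "(real (card (C R)) - 1) * \<delta> / 2 = (real (card (C R)) * (real (card (C R)) - 1) * \<delta> / 2) / real (card (C R))"
      using Cne[OF R] by simp
    also have "\<dots> \<le> real (\<Sum>b\<in>X - A'. x b R * y b R) / real (card (C R))"
      by (rule divide_right_mono[OF step2[OF R]]) simp
    finally show "(real (card (C R)) - 1) * \<delta> / 2 \<le> (\<Sum>b\<in>X - A'. real (x b R) * real (y b R)) / real (card (C R))"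
      by simp
  qed
  also have "\<dots> = (\<Sum>b\<in>X - A'. \<Sum>R\<in>tr P A'. real (x b R) * real (y b R) / real (card (C R)))"
    by (simp add: sum_divide_distrib sum.swap[of _ "tr P A'"])
  also have "\<dots> \<le> (\<Sum>b\<in>X - A'. real (fsum P A' b))"
    using step1 by (intro sum_mono) auto
  finally have L: "(\<Sum>R\<in>tr P A'. (real (card (C R)) - 1) * \<delta> / 2) \<le> real (\<Sum>b\<in>X - A'. fsum P A' b)"
    by simp
  have "(\<Sum>R\<in>tr P A'. (real (card (C R)) - 1) * \<delta> / 2) = \<delta> / 2 * ((\<Sum>R\<in>tr P A'. real (card (C R))) - real (card (tr P A')))"
  proof -
    have "(\<Sum>R\<in>tr P A'. (real (card (C R)) - 1) * \<delta> / 2) = (\<Sum>R\<in>tr P A'. \<delta> / 2 * (real (card (C R)) - 1))"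
      by (intro sum.cong) auto
    also have "\<dots> = \<delta> / 2 * (\<Sum>R\<in>tr P A'. (real (card (C R)) - 1))"
      by (rule sum_distrib_left[symmetric])
    also have "(\<Sum>R\<in>tr P A'. (real (card (C R)) - 1)) = (\<Sum>R\<in>tr P A'. real (card (C R))) - real (card (tr P A'))"
      by (simp add: sum_subtractf)
    finally show ?thesis .
  qed
  also have "(\<Sum>R\<in>tr P A'. real (card (C R))) = real (card P)"
  proof -
    have h: "(\<Sum>R\<in>tr P A'. card (C R)) = card P" using card_fibers[OF fP, of A'] unfolding cnt_def C_def .
    show ?thesis using arg_cong[OF h, of real] by simp
  qed
  finally show ?thesis using L by simp
qed


lemma nosh_tr:
  assumes "nosh d P X" "A \<subseteq> X"
  shows "nosh d (tr P A) A"
  unfolding nosh_def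
proof (intro allI impI)
  fix Y assume Y: "Y \<subseteq> A" "shatters (tr P A) Y"
  have "\<And>S. Y \<inter> (S \<inter> A) = Y \<inter> S" using Y(1) by auto
  then have "(\<lambda>S. Y \<inter> S) ` tr P A = (\<lambda>S. Y \<inter> S) ` P" unfolding tr_def image_image by simp
  then have "shatters P Y" using Y(2) unfolding shatters_def by simp
  then show "card Y \<le> d" using assms Y(1) unfolding nosh_def by auto
qed

lemma cnt_zero: "R \<notin> tr P A \<Longrightarrow> cnt P A R = 0"
proof -
  assume "R \<notin> tr P A"
  then have "{S\<in>P. S \<inter> A = R} = {}" unfolding tr_def by auto
  then show ?thesis unfolding cnt_def by (simp only: card.empty)
qed

lemma upper:
  assumes "finite X" "P \<subseteq> Pow X" "nosh d P X" "A \<subseteq> X"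
  shows "(\<Sum>b\<in>A. fsum P (A - {b}) b) \<le> d * card P"
proof -
  have fA: "finite A" using assms(1,4) finite_subset by blast
  have fP: "finite P" using assms(1,2) by (meson finite_Pow_iff finite_subset)
  define h where "h = (\<lambda>e. min (cnt P A (snd e)) (cnt P A (insert (fst e) (snd e))))"
  have "(\<Sum>b\<in>A. fsum P (A - {b}) b) = (\<Sum>b\<in>A. \<Sum>R\<in>Pow (A - {b}). h (b,R))"
  proof (intro sum.cong refl)
    fix b assume "b \<in> A"
    then have "insert b (A - {b}) = A" by auto
    then show "fsum P (A - {b}) b = (\<Sum>R\<in>Pow (A - {b}). h (b,R))" unfolding fsum_def h_def by simp
  qed
  also have "\<dots> = (\<Sum>e\<in>Sigma A (\<lambda>b. Pow (A - {b})). h e)"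
    using sum.Sigma[of A "\<lambda>b. Pow (A - {b})" "\<lambda>b R. h (b,R)"] fA by simp
  also have "\<dots> = (\<Sum>e\<in>edges (tr P A) A. h e)"
  proof (rule sum.mono_neutral_right)
    show "finite (Sigma A (\<lambda>b. Pow (A - {b})))" using fA by auto
    show "edges (tr P A) A \<subseteq> Sigma A (\<lambda>b. Pow (A - {b}))"
      unfolding edges_def tr_def by auto
    show "\<forall>e\<in>Sigma A (\<lambda>b. Pow (A - {b})) - edges (tr P A) A. h e = 0"
    proof
      fix e assume e: "e \<in> Sigma A (\<lambda>b. Pow (A - {b})) - edges (tr P A) A"
      obtain b R where bR: "e = (b,R)" by (cases e)
      have "b \<in> A" "R \<subseteq> A - {b}" using e bR by auto
      then have "R \<notin> tr P A \<or> insert b R \<notin> tr P A" using e bR unfolding edges_def by auto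
      then show "h e = 0" unfolding h_def bR using cnt_zero[of R P A] cnt_zero[of "insert b R" P A] by auto
    qed
  qed
  also have "\<dots> \<le> d * (\<Sum>R\<in>tr P A. cnt P A R)"
    unfolding h_def
    by (rule wedge[OF fA _ nosh_tr[OF assms(3,4)]]) (auto simp: tr_def)
  also have "(\<Sum>R\<in>tr P A. cnt P A R) = card P" using card_fibers[OF fP] .
  finally show ?thesis .
qed

lemma double_count:
  assumes "finite X"
  shows "(\<Sum>A\<in>{A. A \<subseteq> X \<and> card A = Suc k}. \<Sum>b\<in>A. g (A - {b}) b)
       = (\<Sum>A'\<in>{A. A \<subseteq> X \<and> card A = k}. \<Sum>b\<in>X - A'. g A' b)"
proof -
  define S1 where "S1 = Sigma {A. A \<subseteq> X \<and> card A = Suc k} (\<lambda>A. A)"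
  define S2 where "S2 = Sigma {A. A \<subseteq> X \<and> card A = k} (\<lambda>A'. X - A')"
  have fin1: "finite {A. A \<subseteq> X \<and> card A = Suc k}" "finite {A. A \<subseteq> X \<and> card A = k}"
    using assms by auto
  have "(\<Sum>A\<in>{A. A \<subseteq> X \<and> card A = Suc k}. \<Sum>b\<in>A. g (A - {b}) b) = (\<Sum>e\<in>S1. g (fst e - {snd e}) (snd e))"
    unfolding S1_def using fin1 assms
    by (subst sum.Sigma) (auto intro: finite_subset simp: split_beta)
  also have "\<dots> = (\<Sum>e\<in>S2. g (fst e) (snd e))"
  proof (rule sum.reindex_bij_betw[of "\<lambda>e. (fst e - {snd e}, snd e)" S1 S2 "\<lambda>e. g (fst e) (snd e)", simplified])
    show "bij_betw (\<lambda>e. (fst e - {snd e}, snd e)) S1 S2"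
    proof (rule bij_betwI[where g = "\<lambda>e. (insert (snd e) (fst e), snd e)"])
      show "(\<lambda>e. (fst e - {snd e}, snd e)) \<in> S1 \<rightarrow> S2"
      proof
        fix e assume "e \<in> S1"
        then obtain A b where e: "e = (A,b)" "A \<subseteq> X" "card A = Suc k" "b \<in> A" unfolding S1_def by auto
        have "finite A" using e(2) assms finite_subset by blast
        then have "card (A - {b}) = k" using e by simp
        then show "(fst e - {snd e}, snd e) \<in> S2" unfolding S2_def using e by auto
      qed
      show "(\<lambda>e. (insert (snd e) (fst e), snd e)) \<in> S2 \<rightarrow> S1"
      proof
        fix e assume "e \<in> S2"
        then obtain A b where e: "e = (A,b)" "A \<subseteq> X" "card A = k" "b \<in> X" "b \<notin> A" unfolding S2_def by auto
        have "finite A" using e(2) assms finite_subset by blast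
        then have "card (insert b A) = Suc k" using e by simp
        then show "(insert (snd e) (fst e), snd e) \<in> S1" unfolding S1_def using e by auto
      qed
      show "\<And>e. e \<in> S1 \<Longrightarrow> (insert (snd (fst e - {snd e}, snd e)) (fst (fst e - {snd e}, snd e)), snd (fst e - {snd e}, snd e)) = e"
        unfolding S1_def by auto
      show "\<And>e. e \<in> S2 \<Longrightarrow> (fst (insert (snd e) (fst e), snd e) - {snd (insert (snd e) (fst e), snd e)}, snd (insert (snd e) (fst e), snd e)) = e"
        unfolding S2_def by auto
    qed
  qed
  also have "\<dots> = (\<Sum>A'\<in>{A. A \<subseteq> X \<and> card A = k}. \<Sum>b\<in>X - A'. g A' b)"
    unfolding S2_def using fin1 assms
    by (subst sum.Sigma) (auto simp: split_beta)
  finally show ?thesis .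
qed


lemma Phi_small: "m \<le> d \<Longrightarrow> Phi d m = 2 ^ m"
proof -
  assume md: "m \<le> d"
  have "Phi d m = (\<Sum>i\<le>m. m choose i)" unfolding Phi_def
    by (rule sum.mono_neutral_right) (use md in auto)
  then show ?thesis using choose_row_sum by simp
qed

lemma Phi_bound:
  assumes "1 \<le> d" "d \<le> m"
  shows "real (Phi d m) \<le> (3 * real m / real d) ^ d"
proof -
  define t where "t = real d / real m"
  have m0: "real m > 0" using assms by simp
  have t0: "t > 0" "t \<le> 1" unfolding t_def using assms m0 by auto
  have "t ^ d * real (Phi d m) = (\<Sum>i\<le>d. real (m choose i) * t ^ d)"
    unfolding Phi_def of_nat_sum by (simp add: sum_distrib_left mult.commute)
  also have "\<dots> \<le> (\<Sum>i\<le>d. real (m choose i) * t ^ i)"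
    by (intro sum_mono mult_left_mono power_decreasing) (use t0 in auto)
  also have "\<dots> \<le> (\<Sum>i\<le>m. real (m choose i) * t ^ i)"
    by (intro sum_mono2) (use assms t0 in auto)
  also have "\<dots> = (t + 1) ^ m"
    using binomial_ring[of t 1 m] by simp
  also have "\<dots> \<le> exp t ^ m"
    using exp_ge_add_one_self[of t] t0 by (intro power_mono) (auto simp: add.commute)
  also have "\<dots> = exp (real m * t)" by (simp add: exp_of_nat_mult)
  also have "real m * t = real d * 1" unfolding t_def using m0 by simp
  also have "exp (real d * 1) = exp 1 ^ d" by (rule exp_of_nat_mult)
  also have "\<dots> \<le> 3 ^ d" by (intro power_mono exp_le) auto
  finally have "t ^ d * real (Phi d m) \<le> 3 ^ d" .
  then have "real (Phi d m) \<le> 3 ^ d / t ^ d" using t0 by (simp add: field_simps)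
  also have "\<dots> = (3 * real m / real d) ^ d" unfolding t_def using m0 assms
    by (simp add: power_divide field_simps)
  finally show ?thesis .
qed


lemma two_pow_le: "1 \<le> d \<Longrightarrow> (x::real) \<ge> 0 \<Longrightarrow> 2 * (12 * x) ^ d \<le> (30 * x) ^ d"
proof -
  assume d: "1 \<le> d" and x: "x \<ge> 0"
  have "(2::real) \<le> (5/2) ^ 1" by simp
  also have "\<dots> \<le> (5/2) ^ d" using d by (intro power_increasing) auto
  finally have "2 * (12 * x) ^ d \<le> (5/2) ^ d * (12 * x) ^ d" using x by (intro mult_right_mono) auto
  also have "\<dots> = (5/2 * (12 * x)) ^ d" by (rule power_mult_distrib[symmetric])
  also have "5/2 * (12 * x) = 30 * x" by simp
  finally show ?thesis .
qed

lemma packing: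
  fixes \<delta> :: real
  assumes X: "finite X" and PX: "P \<subseteq> Pow X" and ns: "nosh d P X" and d0: "0 < \<delta>"
    and dn: "\<delta> < real (card X)"
    and sep: "\<forall>S\<in>P. \<forall>S'\<in>P. S \<noteq> S' \<longrightarrow> real (card ((S - S') \<union> (S' - S))) > \<delta>"
  shows "real (card P) \<le> (30 * real (card X) / \<delta>) ^ d"
proof -
  define n where "n = card X"
  have fP: "finite P" using X PX by (meson finite_Pow_iff finite_subset)
  have sX: "card P \<le> Phi d n" unfolding n_def by (rule sauer[OF X PX ns])
  have n0: "real n > 0" using dn d0 unfolding n_def by linarith
  have nd: "real n / \<delta> > 1" using dn d0 unfolding n_def by simp
  show ?thesis
  proof (cases "d = 0")
    case True
    then show ?thesis using sX by simp
  next
    case False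
    then have d1: "1 \<le> d" by simp
    define K where "K = nat \<lceil>4 * real d * real n / \<delta>\<rceil>"
    define y where "y = 4 * real d * real n / \<delta>"
    have y0: "y \<ge> 0" unfolding y_def using d0 n0 by simp
    have Kc: "real K = of_int \<lceil>y\<rceil>" unfolding K_def y_def[symmetric]
      using y0 by simp
    have Kge: "real K \<ge> 4 * real d * real n / \<delta>" using Kc ceiling_correct[of y] unfolding y_def by linarith
    have Klt: "real K < 4 * real d * real n / \<delta> + 1" using Kc ceiling_correct[of y] unfolding y_def by linarith
    have "4 * real d * real n / \<delta> = 4 * real d * (real n / \<delta>)" by simp
    also have "\<dots> > 4 * real d * 1" using nd d1 by (intro mult_strict_left_mono) auto
    finally have K4: "real K > 4 * real d" using Kge by linarith
    show ?thesis
    proof (cases "K \<le> n")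
      case True
      define k where "k = K - 1"
      have Kk: "K = Suc k" unfolding k_def using K4 by simp
      have kn: "k \<le> n" using True Kk by simp
      define A1 where "A1 = {A. A \<subseteq> X \<and> card A = Suc k}"
      define A0 where "A0 = {A. A \<subseteq> X \<and> card A = k}"
      have cA1: "card A1 = n choose Suc k" unfolding A1_def n_def using n_subsets[OF X] .
      have cA0: "card A0 = n choose k" unfolding A0_def n_def using n_subsets[OF X] .
      have U: "(\<Sum>A\<in>A1. \<Sum>b\<in>A. fsum P (A - {b}) b) \<le> card A1 * (d * card P)"
        using sum_bounded_above[of A1 "\<lambda>A. \<Sum>b\<in>A. fsum P (A - {b}) b" "d * card P"]
          upper[OF X PX ns] unfolding A1_def by auto
      have D: "(\<Sum>A\<in>A1. \<Sum>b\<in>A. fsum P (A - {b}) b) = (\<Sum>A'\<in>A0. \<Sum>b\<in>X - A'. fsum P A' b)"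
        unfolding A1_def A0_def by (rule double_count[OF X])
      have Lo: "real (card A0) * (\<delta> / 2 * (real (card P) - real (Phi d k)))
          \<le> real (\<Sum>A'\<in>A0. \<Sum>b\<in>X - A'. fsum P A' b)"
      proof -
        have "real (card A0) * (\<delta> / 2 * (real (card P) - real (Phi d k)))
            = (\<Sum>A'\<in>A0. \<delta> / 2 * (real (card P) - real (Phi d k)))" by simp
        also have "\<dots> \<le> (\<Sum>A'\<in>A0. real (\<Sum>b\<in>X - A'. fsum P A' b))"
        proof (rule sum_mono)
          fix A' assume "A' \<in> A0"
          then have A': "A' \<subseteq> X" "card A' = k" unfolding A0_def by auto
          have fA': "finite A'" using A' X finite_subset by blast
          have "card (tr P A') \<le> Phi d (card A')"
            by (rule sauer[OF fA' _ nosh_tr[OF ns A'(1)]]) (auto simp: tr_def)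
          then have "real (card (tr P A')) \<le> real (Phi d k)" using A' by simp
          then have "\<delta> / 2 * (real (card P) - real (Phi d k)) \<le> \<delta> / 2 * (real (card P) - real (card (tr P A')))"
            using d0 by (intro mult_left_mono) auto
          also have "\<dots> \<le> real (\<Sum>b\<in>X - A'. fsum P A' b)"
            by (rule lower[OF X PX A'(1) _ sep]) (use d0 in auto)
          finally show "\<delta> / 2 * (real (card P) - real (Phi d k)) \<le> real (\<Sum>b\<in>X - A'. fsum P A' b)" .
        qed
        also have "\<dots> = real (\<Sum>A'\<in>A0. \<Sum>b\<in>X - A'. fsum P A' b)" by simp
        finally show ?thesis .
      qed
      have main: "real (n choose k) * (\<delta> / 2 * (real (card P) - real (Phi d k)))
          \<le> real (n choose Suc k) * (real d * real (card P))"
      proof -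
        have "real (\<Sum>A\<in>A1. \<Sum>b\<in>A. fsum P (A - {b}) b) \<le> real (card A1 * (d * card P))"
          using U by linarith
        then show ?thesis using Lo D cA0 cA1 by simp
      qed
      have bin: "real (Suc k) * real (n choose Suc k) = real (n - k) * real (n choose k)"
      proof -
        have "Suc k * (n choose Suc k) = (n - k) * (n choose k)"
          using binomial_absorption[of k n] binomial_absorb_comp[of n k] by simp
        then show ?thesis by (metis of_nat_mult)
      qed
      have bpos: "real (n choose k) > 0" using kn by simp
      have "real (n choose k) * (real (Suc k) * (\<delta> / 2 * (real (card P) - real (Phi d k))))
          = real (Suc k) * (real (n choose k) * (\<delta> / 2 * (real (card P) - real (Phi d k))))" by simp
      also have "\<dots> \<le> real (Suc k) * (real (n choose Suc k) * (real d * real (card P)))"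
        using main by (intro mult_left_mono) auto
      also have "\<dots> = real (n choose k) * (real (n - k) * (real d * real (card P)))"
        using bin by (simp add: algebra_simps)
      finally have m2: "real (Suc k) * (\<delta> / 2 * (real (card P) - real (Phi d k)))
          \<le> real (n - k) * (real d * real (card P))"
        using bpos by (simp only: mult_le_cancel_left_pos)
      have "real (n - k) * real d \<le> real n * real d" using kn by (intro mult_right_mono) auto
      also have "real n * real d \<le> real K * \<delta> / 4" using Kge d0 by (simp add: field_simps)
      finally have h2: "real (n - k) * (real d * real (card P)) \<le> real K * \<delta> / 4 * real (card P)"
        by (metis mult.assoc mult_right_mono of_nat_0_le_iff)
      have h3: "real K * (\<delta> / 2 * (real (card P) - real (Phi d k))) \<le> real K * \<delta> / 4 * real (card P)"
        unfolding Kk using order_trans[OF m2 h2[unfolded Kk]] .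
      have h4: "real K * \<delta> * (2 * (real (card P) - real (Phi d k))) = 4 * (real K * (\<delta> / 2 * (real (card P) - real (Phi d k))))"
        by (simp add: algebra_simps)
      have h5: "real K * \<delta> * real (card P) = 4 * (real K * \<delta> / 4 * real (card P))" by simp
      have "real K * \<delta> * (2 * (real (card P) - real (Phi d k))) \<le> real K * \<delta> * real (card P)"
        using h3 h4 h5 by linarith
      moreover have "real K * \<delta> > 0" using K4 d0 by simp
      ultimately have "2 * (real (card P) - real (Phi d k)) \<le> real (card P)"
        by (simp only: mult_le_cancel_left_pos)
      then have P2: "real (card P) \<le> 2 * real (Phi d k)" by simp
      have dk: "d \<le> k" using K4 Kk by simp
      have "real (Phi d k) \<le> (3 * real k / real d) ^ d" by (rule Phi_bound[OF d1 dk])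
      also have "\<dots> \<le> (12 * (real n / \<delta>)) ^ d"
      proof (rule power_mono)
        have "real k < 4 * real d * real n / \<delta>" using Klt Kk by simp
        then have "3 * real k < 3 * (4 * real d * real n / \<delta>)" by simp
        then have "3 * real k / real d < 3 * (4 * real d * real n / \<delta>) / real d"
          using d1 by (intro divide_strict_right_mono) auto
        also have "\<dots> = 12 * (real n / \<delta>)" using d1 by simp
        finally show "3 * real k / real d \<le> 12 * (real n / \<delta>)" by simp
      qed simp
      finally have "real (card P) \<le> 2 * (12 * (real n / \<delta>)) ^ d" using P2 by simp
      also have "\<dots> \<le> (30 * (real n / \<delta>)) ^ d" using two_pow_le[OF d1, of "real n / \<delta>"] nd by (simp only:)
      finally show ?thesis unfolding n_def by simp
    next
      case False
      then have "real K > real n" by simp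
      then have "4 * real d * real n / \<delta> > real n - 1" using Klt by linarith
      have "4 * real d * real n / \<delta> > real n"
      proof (rule ccontr)
        assume "\<not> 4 * real d * real n / \<delta> > real n"
        then have "y \<le> real n" unfolding y_def by simp
        have "K \<le> n" unfolding K_def y_def[symmetric] using \<open>y \<le> real n\<close> by (simp add: ceiling_le_iff nat_le_iff)
        then show False using False by simp
      qed
      then have "4 * real d * real n > real n * \<delta>" using d0 by (simp add: field_simps)
      then have dl: "\<delta> < 4 * real d" using n0 by (simp add: mult.commute)
      show ?thesis
      proof (cases "d \<le> n")
        case True
        have "real (card P) \<le> real (Phi d n)" using sX by simp
        also have "\<dots> \<le> (3 * real n / real d) ^ d" by (rule Phi_bound[OF d1 True])
        also have "\<dots> \<le> (30 * real n / \<delta>) ^ d"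
        proof (rule power_mono)
          have "3 * real n * \<delta> \<le> 30 * real n * real d" using dl n0 d0 by (simp add: mult_left_mono)
          then show "3 * real n / real d \<le> 30 * real n / \<delta>" using d1 d0 by (simp add: field_simps)
        qed simp
        finally show ?thesis unfolding n_def by simp
      next
        case False
        have "real (card P) \<le> real (Phi d n)" using sX by simp
        also have "\<dots> = 2 ^ n" using Phi_small False by simp
        also have "(2::real) ^ n \<le> 2 ^ d" using False by (intro power_increasing) auto
        also have "(2::real) ^ d \<le> (30 * real n / \<delta>) ^ d"
        proof (rule power_mono)
          have "30 * real n / \<delta> = 30 * (real n / \<delta>)" by simp
          then show "2 \<le> 30 * real n / \<delta>" using nd by linarith
        qed simp
        finally show ?thesis unfolding n_def by simp
      qed
    qed
  qed
qed



lemma cover: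
  fixes T :: "'i \<Rightarrow> 'a set" and \<delta> :: real
  assumes fB: "finite B" and fX: "finite X" and TX: "\<forall>x\<in>B. T x \<subseteq> X" and ns: "nosh d (T ` B) X"
    and d0: "0 < \<delta>" and dn: "\<delta> < real (card X)"
  shows "\<exists>F\<subseteq>B. real (card F) \<le> (30 * real (card X) / \<delta>) ^ d \<and>
     (\<forall>b\<in>B. \<exists>x\<in>F. real (card ((T x - T b) \<union> (T b - T x))) \<le> \<delta>)"
proof -
  define sepd where "sepd = (\<lambda>F. \<forall>x\<in>F. \<forall>y\<in>F. x \<noteq> y \<longrightarrow> real (card ((T x - T y) \<union> (T y - T x))) > \<delta>)"
  define SS where "SS = {F. F \<subseteq> B \<and> sepd F}"
  have "finite SS" unfolding SS_def using fB by simp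
  moreover have "{} \<in> SS" unfolding SS_def sepd_def by simp
  ultimately obtain F where F: "F \<in> SS" and Fmax: "\<forall>G\<in>SS. F \<le> G \<longrightarrow> F = G"
    using finite_has_maximal[of SS] by blast
  have FB: "F \<subseteq> B" and Fs: "sepd F" using F unfolding SS_def by auto
  have inj: "inj_on T F"
  proof (rule inj_onI)
    fix x y assume xy: "x \<in> F" "y \<in> F" "T x = T y"
    show "x = y"
    proof (rule ccontr)
      assume "x \<noteq> y"
      then have "real (card ((T x - T y) \<union> (T y - T x))) > \<delta>" using Fs xy unfolding sepd_def by blast
      then show False using xy(3) d0 by simp
    qed
  qed
  have PX: "T ` F \<subseteq> Pow X" using TX FB by auto
  have nsF: "nosh d (T ` F) X" using nosh_mono[OF _ ns] FB by (meson image_mono)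
  have sepP: "\<forall>S\<in>T ` F. \<forall>S'\<in>T ` F. S \<noteq> S' \<longrightarrow> real (card ((S - S') \<union> (S' - S))) > \<delta>"
    using Fs unfolding sepd_def by auto
  have "real (card (T ` F)) \<le> (30 * real (card X) / \<delta>) ^ d"
    by (rule packing[OF fX PX nsF d0 dn sepP])
  then have bound: "real (card F) \<le> (30 * real (card X) / \<delta>) ^ d" using card_image[OF inj] by simp
  have cov: "\<forall>b\<in>B. \<exists>x\<in>F. real (card ((T x - T b) \<union> (T b - T x))) \<le> \<delta>"
  proof
    fix b assume b: "b \<in> B"
    show "\<exists>x\<in>F. real (card ((T x - T b) \<union> (T b - T x))) \<le> \<delta>"
    proof (cases "b \<in> F")
      case True
      then show ?thesis using d0 by (intro bexI[of _ b]) auto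
    next
      case False
      have "insert b F \<notin> SS" using Fmax False by blast
      then have "\<not> sepd (insert b F)" unfolding SS_def using FB b by auto
      then obtain x y where xy: "x \<in> insert b F" "y \<in> insert b F" "x \<noteq> y"
        "real (card ((T x - T y) \<union> (T y - T x))) \<le> \<delta>" unfolding sepd_def by (auto simp: not_less)
      have sym: "\<And>U V. (U - V) \<union> (V - U) = (V - U) \<union> (U - V)" by auto
      show ?thesis
      proof (cases "x = b")
        case True
        then have "y \<in> F" using xy by auto
        then show ?thesis using xy True sym by metis
      next
        case False
        then have xF: "x \<in> F" using xy by auto
        have "y = b"
        proof (rule ccontr)
          assume "y \<noteq> b"
          then have "y \<in> F" using xy by auto
          then have "real (card ((T x - T y) \<union> (T y - T x))) > \<delta>" using Fs xF xy(3) unfolding sepd_def by blast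
          then show False using xy(4) by simp
        qed
        then show ?thesis using xy xF by metis
      qed
    qed
  qed
  show ?thesis using FB bound cov by blast
qed


lemma sd_image_card:
  assumes "inj_on f C" "U \<subseteq> C" "V \<subseteq> C"
  shows "card ((f ` U - f ` V) \<union> (f ` V - f ` U)) = card ((U - V) \<union> (V - U))"
proof -
  have "f ` U - f ` V = f ` (U - V)" using inj_on_image_set_diff[OF assms(1)] assms(2,3) by auto
  moreover have "f ` V - f ` U = f ` (V - U)" using inj_on_image_set_diff[OF assms(1)] assms(2,3) by auto
  ultimately have "(f ` U - f ` V) \<union> (f ` V - f ` U) = f ` ((U - V) \<union> (V - U))" by (simp add: image_Un)
  moreover have "inj_on f ((U - V) \<union> (V - U))" using assms by (meson inj_on_subset Un_least Diff_subset order_trans)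
  ultimately show ?thesis by (simp add: card_image)
qed

lemma sd_sym: "card ((U - V) \<union> (V - U)) = card ((V - U) \<union> (U - V))"
  by (simp add: Un_commute)

lemma VC_nosh:
  assumes "VC C F \<le> enat d" "X \<subseteq> C" "finite X"
  shows "nosh d F X"
  unfolding nosh_def
proof (intro allI impI)
  fix Y assume Y: "Y \<subseteq> X" "shatters F Y"
  then have "Y \<in> {Y. Y \<subseteq> C \<and> finite Y \<and> shatters F Y}" using assms(2,3) finite_subset by auto
  then have "enat (card Y) \<le> VC C F" unfolding VC_def by (rule SUP_upper)
  then have "enat (card Y) \<le> enat d" using assms(1) by (rule order_trans)
  then show "card Y \<le> d" by simp
qed

lemma l_coset_img: "x <#\<^bsub>G\<^esub> A = (\<lambda>a. x \<otimes>\<^bsub>G\<^esub> a) ` A"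
  unfolding l_coset_def by auto

lemma r_coset_img: "A #>\<^bsub>G\<^esub> x = (\<lambda>a. a \<otimes>\<^bsub>G\<^esub> x) ` A"
  unfolding r_coset_def by auto

lemma set_inv_img: "set_inv\<^bsub>G\<^esub> A = (\<lambda>a. inv\<^bsub>G\<^esub> a) ` A"
  unfolding SET_INV_def by auto

lemma set_mult_mem: "h \<in> H \<Longrightarrow> k \<in> K \<Longrightarrow> h \<otimes>\<^bsub>G\<^esub> k \<in> H <#>\<^bsub>G\<^esub> K"
  unfolding set_mult_def by auto

lemma set_mult_finite: "finite H \<Longrightarrow> finite K \<Longrightarrow> finite (H <#>\<^bsub>G\<^esub> K)"
  unfolding set_mult_def by auto


theorem corollary2p11:
  fixes G :: "('a, 'b) monoid_scheme" and A B :: "'a set" and \<epsilon> :: real and d :: nat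
  assumes "group G"
    and "A \<subseteq> carrier G" and "B \<subseteq> carrier G"
    and "finite A" and "finite B" and "A \<noteq> {}" and "B \<noteq> {}"
    and "0 < \<epsilon>" and "\<epsilon> < 1"
  shows "(VC_l G B A \<le> enat d \<longrightarrow>
           cov_le G B (St_l G \<epsilon> A)
             ((30 * real (card (B <#>\<^bsub>G\<^esub> A)) / (\<epsilon> * real (card A))) ^ d))
       \<and> (VC_r G B A \<le> enat d \<longrightarrow>
           cov_le G (set_inv\<^bsub>G\<^esub> B) (St_r G \<epsilon> A)
             ((30 * real (card (A <#>\<^bsub>G\<^esub> B)) / (\<epsilon> * real (card A))) ^ d))"
proof -
  interpret group G by (rule assms(1))
  have AC: "A \<subseteq> carrier G" and BC: "B \<subseteq> carrier G" using assms by auto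
  have cA: "real (card A) > 0" using assms(4,6) by (simp add: card_gt_0_iff)
  have d0: "0 < \<epsilon> * real (card A)" using assms(8) cA by simp
  have dA: "\<epsilon> * real (card A) < real (card A)" using assms(9) cA by simp
  obtain b0 where b0: "b0 \<in> B" using assms(7) by auto
  show ?thesis
  proof (intro conjI impI)
    assume VC: "VC_l G B A \<le> enat d"
    define X where "X = B <#>\<^bsub>G\<^esub> A"
    define T where "T = (\<lambda>x. x <#\<^bsub>G\<^esub> A)"
    have fX: "finite X" unfolding X_def by (rule set_mult_finite[OF assms(5) assms(4)])
    have XC: "X \<subseteq> carrier G" unfolding X_def set_mult_def using AC BC by auto
    have TX: "\<forall>x\<in>B. T x \<subseteq> X" unfolding T_def X_def l_coset_img set_mult_def by auto
    have ns: "nosh d (T ` B) X" using VC_nosh[OF VC[unfolded VC_l_def] XC fX] unfolding T_def .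
    have "card (T b0) = card A" unfolding T_def l_coset_img
    proof (intro card_image inj_onI)
      fix u v assume "u \<in> A" "v \<in> A" "b0 \<otimes>\<^bsub>G\<^esub> u = b0 \<otimes>\<^bsub>G\<^esub> v"
      then show "u = v" using b0 BC AC by (metis Units_eq Units_l_cancel subsetD)
    qed
    moreover have "card (T b0) \<le> card X" using TX b0 fX by (intro card_mono) auto
    ultimately have dn: "\<epsilon> * real (card A) < real (card X)" using dA by linarith
    obtain F where FB: "F \<subseteq> B" and Fb: "real (card F) \<le> (30 * real (card X) / (\<epsilon> * real (card A))) ^ d"
      and Fc: "\<forall>b\<in>B. \<exists>x\<in>F. real (card ((T x - T b) \<union> (T b - T x))) \<le> \<epsilon> * real (card A)"
      using cover[OF assms(5) fX TX ns d0 dn] by blast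
    show "cov_le G B (St_l G \<epsilon> A) ((30 * real (card (B <#>\<^bsub>G\<^esub> A)) / (\<epsilon> * real (card A))) ^ d)"
      unfolding cov_le_def
    proof (intro exI conjI)
      show "F \<subseteq> B" by fact
      show "finite F" using FB assms(5) finite_subset by blast
      show "real (card F) \<le> (30 * real (card (B <#>\<^bsub>G\<^esub> A)) / (\<epsilon> * real (card A))) ^ d"
        using Fb unfolding X_def .
      show "B \<subseteq> F <#>\<^bsub>G\<^esub> St_l G \<epsilon> A"
      proof
        fix b assume b: "b \<in> B"
        then obtain x where x: "x \<in> F" "real (card ((T x - T b) \<union> (T b - T x))) \<le> \<epsilon> * real (card A)"
          using Fc by blast
        have xC: "x \<in> carrier G" and bC: "b \<in> carrier G" using x(1) FB BC b by auto
        define s where "s = inv\<^bsub>G\<^esub> x \<otimes>\<^bsub>G\<^esub> b"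
        have sC: "s \<in> carrier G" unfolding s_def using xC bC by simp
        have bs: "b = x \<otimes>\<^bsub>G\<^esub> s" unfolding s_def using xC bC by (simp add: m_assoc[symmetric])
        define \<phi> where "\<phi> = (\<lambda>z. inv\<^bsub>G\<^esub> x \<otimes>\<^bsub>G\<^esub> z)"
        have inj: "inj_on \<phi> (carrier G)" unfolding \<phi>_def using xC by (intro inj_onI) simp
        have e1: "s <#\<^bsub>G\<^esub> A = \<phi> ` T b" unfolding T_def l_coset_img \<phi>_def image_image s_def
          using xC bC AC by (intro image_cong refl) (auto simp: m_assoc)
        have e2: "A = \<phi> ` T x"
        proof -
          have "\<phi> ` T x = (\<lambda>a. a) ` A" unfolding T_def l_coset_img \<phi>_def image_image
            using xC AC by (intro image_cong refl) (auto simp: m_assoc[symmetric])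
          then show ?thesis by simp
        qed
        have TbC: "T b \<subseteq> carrier G" "T x \<subseteq> carrier G" using TX b x(1) FB XC by auto
        have "card (((s <#\<^bsub>G\<^esub> A) - A) \<union> (A - (s <#\<^bsub>G\<^esub> A))) = card ((T b - T x) \<union> (T x - T b))"
          unfolding e1 by (subst (1 2) e2) (rule sd_image_card[OF inj TbC])
        then have "real (card (((s <#\<^bsub>G\<^esub> A) - A) \<union> (A - (s <#\<^bsub>G\<^esub> A)))) \<le> \<epsilon> * real (card A)"
          using x(2) sd_sym[of "T b" "T x"] by simp
        then have "s \<in> St_l G \<epsilon> A" unfolding St_l_def using sC by simp
        then show "b \<in> F <#>\<^bsub>G\<^esub> St_l G \<epsilon> A" unfolding bs by (rule set_mult_mem[OF x(1)])
      qed
    qed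
  next
    assume VC: "VC_r G B A \<le> enat d"
    define X where "X = A <#>\<^bsub>G\<^esub> B"
    define T where "T = (\<lambda>x. A #>\<^bsub>G\<^esub> x)"
    have fX: "finite X" unfolding X_def by (rule set_mult_finite[OF assms(4) assms(5)])
    have XC: "X \<subseteq> carrier G" unfolding X_def set_mult_def using AC BC by auto
    have TX: "\<forall>x\<in>B. T x \<subseteq> X" unfolding T_def X_def r_coset_img set_mult_def by auto
    have ns: "nosh d (T ` B) X" using VC_nosh[OF VC[unfolded VC_r_def] XC fX] unfolding T_def .
    have "card (T b0) = card A" unfolding T_def r_coset_img
    proof (intro card_image inj_onI)
      fix u v assume "u \<in> A" "v \<in> A" "u \<otimes>\<^bsub>G\<^esub> b0 = v \<otimes>\<^bsub>G\<^esub> b0"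
      then show "u = v" using b0 BC AC by (metis right_cancel subsetD)
    qed
    moreover have "card (T b0) \<le> card X" using TX b0 fX by (intro card_mono) auto
    ultimately have dn: "\<epsilon> * real (card A) < real (card X)" using dA by linarith
    obtain F where FB: "F \<subseteq> B" and Fb: "real (card F) \<le> (30 * real (card X) / (\<epsilon> * real (card A))) ^ d"
      and Fc: "\<forall>b\<in>B. \<exists>x\<in>F. real (card ((T x - T b) \<union> (T b - T x))) \<le> \<epsilon> * real (card A)"
      using cover[OF assms(5) fX TX ns d0 dn] by blast
    have fF: "finite F" using FB assms(5) finite_subset by blast
    show "cov_le G (set_inv\<^bsub>G\<^esub> B) (St_r G \<epsilon> A) ((30 * real (card (A <#>\<^bsub>G\<^esub> B)) / (\<epsilon> * real (card A))) ^ d)"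
      unfolding cov_le_def
    proof (intro exI conjI)
      show "set_inv\<^bsub>G\<^esub> F \<subseteq> set_inv\<^bsub>G\<^esub> B" unfolding set_inv_img using FB by auto
      show "finite (set_inv\<^bsub>G\<^esub> F)" unfolding set_inv_img using fF by simp
      have "card (set_inv\<^bsub>G\<^esub> F) \<le> card F" unfolding set_inv_img using fF by (rule card_image_le)
      then show "real (card (set_inv\<^bsub>G\<^esub> F)) \<le> (30 * real (card (A <#>\<^bsub>G\<^esub> B)) / (\<epsilon> * real (card A))) ^ d"
        using Fb unfolding X_def by linarith
      show "set_inv\<^bsub>G\<^esub> B \<subseteq> set_inv\<^bsub>G\<^esub> F <#>\<^bsub>G\<^esub> St_r G \<epsilon> A"
      proof
        fix c assume "c \<in> set_inv\<^bsub>G\<^esub> B"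
        then obtain b where b: "b \<in> B" "c = inv\<^bsub>G\<^esub> b" unfolding set_inv_img by auto
        then obtain x where x: "x \<in> F" "real (card ((T x - T b) \<union> (T b - T x))) \<le> \<epsilon> * real (card A)"
          using Fc by blast
        have xC: "x \<in> carrier G" and bC: "b \<in> carrier G" using x(1) FB BC b by auto
        define s where "s = x \<otimes>\<^bsub>G\<^esub> inv\<^bsub>G\<^esub> b"
        have sC: "s \<in> carrier G" unfolding s_def using xC bC by simp
        have cs: "c = inv\<^bsub>G\<^esub> x \<otimes>\<^bsub>G\<^esub> s" unfolding s_def b(2) using xC bC by (simp add: m_assoc[symmetric])
        define \<psi> where "\<psi> = (\<lambda>z. z \<otimes>\<^bsub>G\<^esub> inv\<^bsub>G\<^esub> b)"
        have inj: "inj_on \<psi> (carrier G)" unfolding \<psi>_def using bC by (intro inj_onI) simp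
        have e1: "A #>\<^bsub>G\<^esub> s = \<psi> ` T x" unfolding T_def r_coset_img \<psi>_def image_image s_def
          using xC bC AC by (intro image_cong refl) (auto simp: m_assoc)
        have e2: "A = \<psi> ` T b"
        proof -
          have "\<psi> ` T b = (\<lambda>a. a) ` A" unfolding T_def r_coset_img \<psi>_def image_image
            using bC AC by (intro image_cong refl) (auto simp: m_assoc)
          then show ?thesis by simp
        qed
        have TbC: "T x \<subseteq> carrier G" "T b \<subseteq> carrier G" using TX b(1) x(1) FB XC by auto
        have "card (((A #>\<^bsub>G\<^esub> s) - A) \<union> (A - (A #>\<^bsub>G\<^esub> s))) = card ((T x - T b) \<union> (T b - T x))"
          unfolding e1 by (subst (1 2) e2) (rule sd_image_card[OF inj TbC])
        then have "real (card (((A #>\<^bsub>G\<^esub> s) - A) \<union> (A - (A #>\<^bsub>G\<^esub> s)))) \<le> \<epsilon> * real (card A)"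
          using x(2) by simp
        then have "s \<in> St_r G \<epsilon> A" unfolding St_r_def using sC by simp
        moreover have "inv\<^bsub>G\<^esub> x \<in> set_inv\<^bsub>G\<^esub> F" unfolding set_inv_img using x(1) by simp
        ultimately show "c \<in> set_inv\<^bsub>G\<^esub> F <#>\<^bsub>G\<^esub> St_r G \<epsilon> A" unfolding cs by (rule set_mult_mem[rotated])
      qed
    qed
  qed
qed

end
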